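(* Let $n,t$ be positive integers. Let $T[l,r)$ be a parallel task and let $T[l_s,r_s)$ with $l\le l_s<r_s\le r$ be a sequential task that is a bucket of $T[l,r)$, assigned to thread $i=\min(\lfloor l_st/n\rfloor,\lfloor rt/n\rfloor-1)$. Then $i\,n/t\le l_s<r_s\le (i+2)n/t$, i.e. the task only contains elements of $A[in/t,\,(i+2)n/t-1]$. Consequently (since sequential subtasks of a sequential task are subintervals of it and are processed by the same thread), all sequential tasks processed by thread $i$ only contain elements from $A[in/t,\,(i+2)n/t-1]$, a range of $O(n/t)$ elements.
   Context: An input array $A[0..n-1]$ is sorted by $t$ threads numbered $0,\dots,t-1$. A task $T[l,r)$ (integers $0\le l<r\le n$) refers to the subarray $A[l..r-1]$. Write $\underline{t}=\lfloor lt/n\rfloor$ and $\overline{t}=\lfloor rt/n\rfloor$. The task is a parallel task if $\overline{t}-\underline{t}>1$, executed by threads $\underline{t},\dots,\overline{t}-1$; otherwise ($\overline{t}-\underline{t}\le 1$) it is a sequential task. A sequential task $T[l_s,r_s)$ arising as a bucket of a parallel task $T[l,r)$ is assigned to thread $\min(\lfloor l_st/n\rfloor,\lfloor rt/n\rfloor-1)$; a sequential task is partitioned by its thread into buckets, which become sequential subtasks of the same thread. *)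

theory Defs
  imports Complex_Main
begin

definition tidx :: "nat \<Rightarrow> nat \<Rightarrow> nat \<Rightarrow> int" where
  "tidx n t x = \<lfloor>real x * real t / real n\<rfloor>"

definition is_task :: "nat \<Rightarrow> nat \<Rightarrow> nat \<Rightarrow> bool" where
  "is_task n l r \<longleftrightarrow> l < r \<and> r \<le> n"

definition parallel_task :: "nat \<Rightarrow> nat \<Rightarrow> nat \<Rightarrow> nat \<Rightarrow> bool" where
  "parallel_task n t l r \<longleftrightarrow> is_task n l r \<and> tidx n t r - tidx n t l > 1"

definition sequential_task :: "nat \<Rightarrow> nat \<Rightarrow> nat \<Rightarrow> nat \<Rightarrow> bool" where
  "sequential_task n t l r \<longleftrightarrow> is_task n l r \<and> tidx n t r - tidx n t l \<le> 1"

definition assigned_thread :: "nat \<Rightarrow> nat \<Rightarrow> nat \<Rightarrow> nat \<Rightarrow> int" where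
  "assigned_thread n t ls r = min (tidx n t ls) (tidx n t r - 1)"

end

theory Submission
  imports Defs
begin

theorem lemma4p6:
  fixes n t l r ls rs :: nat
  assumes "n > 0" and "t > 0"
    and "parallel_task n t l r"
    and "sequential_task n t ls rs"
    and "l \<le> ls" and "ls < rs" and "rs \<le> r"
  shows "real_of_int (assigned_thread n t ls r) * real n / real t \<le> real ls
       \<and> real rs \<le> real_of_int (assigned_thread n t ls r + 2) * real n / real t
       \<and> (\<forall>l' r'. ls \<le> l' \<and> l' < r' \<and> r' \<le> rs \<longrightarrow>
             real_of_int (assigned_thread n t ls r) * real n / real t \<le> real l'
           \<and> real r' \<le> real_of_int (assigned_thread n t ls r + 2) * real n / real t)"
proof -
  define i where "i = assigned_thread n t ls r"
  define a where "a = tidx n t ls"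
  define b where "b = tidx n t r"
  define s where "s = tidx n t rs"
  have pn: "real n > 0" "real t > 0" using assms by auto
  have seq: "s - a \<le> 1" using assms(4) unfolding sequential_task_def a_def s_def by auto
  have mono: "\<And>x y. x \<le> y \<Longrightarrow> tidx n t x \<le> tidx n t y"
    unfolding tidx_def by (intro floor_mono divide_right_mono mult_right_mono) auto
  have ab: "a \<le> b" using mono assms by (simp add: a_def b_def)
  have sb: "s \<le> b" using mono assms by (simp add: s_def b_def)
  have a1: "real_of_int a \<le> real ls * t / n" unfolding a_def tidx_def by linarith
  have s1: "real rs * t / n < real_of_int s + 1" unfolding s_def tidx_def by linarith
  have i_def': "i = min a (b - 1)" by (simp add: i_def assigned_thread_def a_def b_def)
  have le1: "real_of_int i \<le> real ls * t / n" using a1 i_def' by auto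
  have le2: "real rs * t / n \<le> real_of_int (i + 2)"
  proof (cases "a \<le> b - 1")
    case True then show ?thesis using i_def' seq s1 by simp
  next
    case False then have "a = b" "i = b - 1" using ab i_def' by auto
    then show ?thesis using sb s1 by simp
  qed
  have A: "real_of_int i * real n / real t \<le> real ls"
    using le1 pn by (simp add: field_simps)
  have B: "real rs \<le> real_of_int (i + 2) * real n / real t"
    using le2 pn by (simp add: field_simps)
  show ?thesis unfolding i_def[symmetric] using A B
    by (smt (verit, ccfv_threshold) of_nat_le_iff)
qed

end
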